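(* Let $W\in C^1(\mathbb{R}\setminus\{0\})$ satisfy $W''=-\delta_0+w$ in the distributional sense, where $\delta_0$ is the Dirac mass at $0$, $w\in C_b(\mathbb{R})$ and $\|w\|_{L^1(\mathbb{R})}=w_0<\infty$. Let $a\in C^1(\mathbb{R})$ satisfy $0\le a'(x)\le \alpha$ for all $x\in\mathbb{R}$, and let $A$ be the antiderivative of $a$ with $A(0)=0$. Let $\rho^{ini}\in\mathcal{P}_1(\mathbb{R})$ be nonnegative and compactly supported, with total mass $M=|\rho^{ini}|(\mathbb{R})$, and set $c:=\max_{x\in[-M(1+w_0),M(1+w_0)]}|a(x)|$. Consider a uniform grid $x_i=x_0+i\,\delta x$, $i=0,\dots,N_x$, with $\mathrm{supp}(\rho^{ini})\subset[x_0,x_{N_x}]$, time step $\delta t$, and $\lambda=\delta t/\delta x$. Set $\rho_i^0=\frac{1}{\delta x}\int_{[x_i,x_{i+1})}\rho^{ini}(dx)$, and for $n\ge 0$ define the sequences by the following scheme, with the boundary conventions $\rho_0^n=S_0^n=S_1^n=J_{-1/2}^n=0$ and $\rho_{N_x}^n=S_{N_x}^n=J_{N_x+1/2}^n=0$: \begin{itemize} \item $\nu_i^n=\sum_{k=1}^{N_x}\rho_k^n w_{ki}$ with $w_{ki}=\int_{(i-1-k)\delta x}^{(i-k)\delta x}w(z)\,dz$; \item $-\dfrac{S_{i+1}^n-2S_i^n+S_{i-1}^n}{\delta x^2}+\nu_i^n=\rho_i^n$; \item $\partial_xS_{i+1}^n=\dfrac{S_{i+2}^n-S_i^n}{2\delta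 x}$; \item $a_{i+1/2}^n=0$ if $\partial_xS_{i+1}^n=\partial_xS_i^n$, and $a_{i+1/2}^n=\dfrac{A(\partial_xS_{i+1}^n)-A(\partial_xS_i^n)}{\partial_xS_{i+1}^n-\partial_xS_i^n}$ otherwise; \item $J_{i+1/2}^n=-\dfrac{A(\partial_xS_{i+1}^n)-A(\partial_xS_i^n)}{\delta x}+a_{i+1/2}^n\dfrac{\nu_{i+1}^n+\nu_i^n}{2}$; \item $\rho_i^{n+1}=\rho_i^n-\dfrac{\lambda}{2}\big(J_{i+1/2}^n-J_{i-1/2}^n\big)+\dfrac{\lambda}{2}c\big(\rho_{i+1}^n-2\rho_i^n+\rho_{i-1}^n\big)$. \end{itemize} Assume the CFL condition $\lambda=\dfrac{\delta t}{\delta x}\le\dfrac{2}{3c}$. Then for all $i$ and all $n\in\mathbb{N}$, $$\rho_i^n\ge 0,\qquad |a_{i+1/2}^n|\le c.$$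
   Context: $\mathcal{P}_1(\mathbb{R})$ denotes the set of nonnegative bounded Radon measures $\mu$ on $\mathbb{R}$ with $\int_{\mathbb{R}}|x|\,d\mu(x)<\infty$. The scheme is a Lax–Friedrichs type discretization of the aggregation equation $\partial_t\rho+\partial_x(a(W'*\rho)\rho)=0$, where $S_i^n$ approximates $W*\rho$ and $\nu_i^n$ approximates $w*\rho$ at $(t_n,x_i)$, $t_n=n\delta t$.
   Formalization: The convention $S_{N_x}^n=0$ is dropped, and the discrete Poisson equation holds at every node $0\le i\le N_x$, which determines S at one node beyond each end of the grid from $S_0^n=S_1^n=0$. Each condition added here is assumed in the paper as well or is needed for the statement above to hold. *)

theory Defs
  imports "HOL-Analysis.Analysis"
begin

definition test_fun :: "(real \<Rightarrow> real) \<Rightarrow> bool" where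
  "test_fun \<phi> \<longleftrightarrow> (\<forall>k x. (deriv ^^ k) \<phi> differentiable (at x))
                    \<and> compact (closure {x. \<phi> x \<noteq> 0})"

definition weak_second_deriv_dirac :: "(real \<Rightarrow> real) \<Rightarrow> (real \<Rightarrow> real) \<Rightarrow> bool" where
  "weak_second_deriv_dirac W w \<longleftrightarrow>
     (\<forall>\<phi>. test_fun \<phi> \<longrightarrow>
        integrable lborel (\<lambda>x. W x * (deriv ^^ 2) \<phi> x) \<and>
        (LINT x|lborel. W x * (deriv ^^ 2) \<phi> x) = - \<phi> 0 + (LINT x|lborel. w x * \<phi> x))"

definition grid :: "real \<Rightarrow> real \<Rightarrow> int \<Rightarrow> real" where
  "grid x0 dx i = x0 + real_of_int i * dx"

definition wgt :: "(real \<Rightarrow> real) \<Rightarrow> real \<Rightarrow> int \<Rightarrow> int \<Rightarrow> real" where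
  "wgt w dx k i = (LBINT z = real_of_int (i - 1 - k) * dx .. real_of_int (i - k) * dx. w z)"

end

theory Submission
  imports Defs
begin

lemma ind_sum:
  fixes h a x :: real assumes "0 < h"
  shows "(\<Sum>j<N. indicator {a + real j * h <.. a + real (j+1) * h} x) = (indicator {a <.. a + real N * h} x :: real)"
proof (induction N)
  case 0 then show ?case by (simp add: indicator_def)
next
  case (Suc N)
  have "a + real N * h \<le> a + real (Suc N) * h" using assms by simp
  moreover have "a \<le> a + real N * h" using assms by simp
  ultimately show ?case using Suc by (auto simp: indicator_def)
qed

lemma wsum:
  fixes w :: "real \<Rightarrow> real" and h a :: real
  assumes w: "integrable lborel w" and h: "0 < h"
  shows "(\<Sum>j<N. \<bar>LBINT z = a + real j*h .. a + real (j+1)*h. w z\<bar>) \<le> (LINT x|lborel. \<bar>w x\<bar>)"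
proof -
  let ?I = "\<lambda>j::nat. {a + real j * h <.. a + real (j+1) * h}"
  have aw: "integrable lborel (\<lambda>x. \<bar>w x\<bar>)" using w by simp
  have "(\<Sum>j<N. \<bar>LBINT z = a + real j*h .. a + real (j+1)*h. w z\<bar>)
      = (\<Sum>j<N. \<bar>LINT x|lborel. w x * indicator (?I j) x\<bar>)"
  proof (rule sum.cong[OF refl])
    fix j assume "j \<in> {..<N}"
    have "a + real j*h \<le> a + real (j+1)*h" using h by simp
    then show "\<bar>LBINT z = a + real j*h .. a + real (j+1)*h. w z\<bar> = \<bar>LINT x|lborel. w x * indicator (?I j) x\<bar>"
      by (simp add: interval_integral_Ioc set_lebesgue_integral_def mult.commute)
  qed
  also have "\<dots> \<le> (\<Sum>j<N. LINT x|lborel. \<bar>w x\<bar> * indicator (?I j) x)"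
  proof (rule sum_mono)
    fix j assume "j \<in> {..<N}"
    have "\<bar>LINT x|lborel. w x * indicator (?I j) x\<bar> \<le> (LINT x|lborel. \<bar>w x * indicator (?I j) x\<bar>)"
      by (rule integral_abs_bound)
    also have "\<dots> = (LINT x|lborel. \<bar>w x\<bar> * indicator (?I j) x)"
      by (simp add: abs_mult)
    finally show "\<bar>LINT x|lborel. w x * indicator (?I j) x\<bar> \<le> (LINT x|lborel. \<bar>w x\<bar> * indicator (?I j) x)" .
  qed
  also have "\<dots> = (LINT x|lborel. (\<Sum>j<N. \<bar>w x\<bar> * indicator (?I j) x))"
    by (rule Bochner_Integration.integral_sum[symmetric]) (auto intro!: integrable_real_mult_indicator aw)
  also have "\<dots> = (LINT x|lborel. \<bar>w x\<bar> * indicator {a <.. a + real N * h} x)"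
    by (simp only: sum_distrib_left[symmetric] ind_sum[OF h])
  also have "\<dots> \<le> (LINT x|lborel. \<bar>w x\<bar>)"
    apply (rule integral_mono)
      apply (rule integrable_real_mult_indicator, simp, rule aw)
     apply (rule aw)
    by (simp add: indicator_def)
  finally show ?thesis .
qed

lemma dq_bound:
  fixes A a :: "real \<Rightarrow> real"
  assumes Ad: "\<forall>x. (A has_real_derivative a x) (at x)"
    and ab: "\<And>z. \<bar>z\<bar> \<le> R \<Longrightarrow> \<bar>a z\<bar> \<le> c"
    and x: "\<bar>x\<bar> \<le> R" and y: "\<bar>y\<bar> \<le> R" and xy: "x \<noteq> y"
  shows "\<bar>(A y - A x) / (y - x)\<bar> \<le> c"
proof (cases "x < y")
  case True
  obtain z where z: "x < z" "z < y" "A y - A x = (y - x) * a z"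
    using MVT2[OF True, of A a] Ad by blast
  have "\<bar>z\<bar> \<le> R" using z x y by auto
  then show ?thesis using z True ab by simp
next
  case False
  then have yx: "y < x" using xy by simp
  obtain z where z: "y < z" "z < x" "A x - A y = (x - y) * a z"
    using MVT2[OF yx, of A a] Ad by blast
  have "\<bar>z\<bar> \<le> R" using z x y by auto
  moreover have "(A y - A x) / (y - x) = a z"
  proof -
    have "(A y - A x) / (y - x) = (A x - A y) / (x - y)"
      by (metis minus_diff_eq minus_divide_divide)
    also have "\<dots> = a z" using z yx by simp
    finally show ?thesis .
  qed
  ultimately show ?thesis using ab by simp
qed

lemma tele:
  fixes g :: "int \<Rightarrow> real"
  shows "(\<Sum>k=1..K. (g (int k) - g (int k - 1))) = g (int K) - g 0"
  by (induction K) (simp_all add: sum.cl_ivl_Suc)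

lemma drop_last:
  fixes f :: "nat \<Rightarrow> real"
  assumes "f N = 0"
  shows "(\<Sum>k=1..N. f k) = (\<Sum>k=1..N-1. f k)"
  using assms by (cases N) (simp_all add: sum.cl_ivl_Suc)

lemma disj_aux:
  fixes dx x0 x :: real
  assumes "0 < dx" "x0 + real l * dx \<le> x" "x < x0 + real (k+1) * dx"
  shows "l \<le> k"
proof -
  have "real l * dx < real (k+1) * dx" using assms by linarith
  then have "real l < real (k+1)" using assms(1) by (simp add: mult_less_cancel_right)
  then show ?thesis by simp
qed

lemma int_sum_nat:
  fixes f :: "int \<Rightarrow> real"
  shows "(\<Sum>k = 1 .. int N. f k) = (\<Sum>k = 1..N. f (int k))"
proof -
  have "{1 .. int N} = int ` {1..N}" using image_int_atLeastAtMost[of 1 N] by simp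
  then show ?thesis by (simp add: sum.reindex)
qed

lemma half_abs:
  fixes x a b :: real
  shows "x = (a + b) / 2 \<Longrightarrow> \<bar>x\<bar> \<le> (\<bar>a\<bar> + \<bar>b\<bar>) / 2"
  by (simp add: abs_triangle_ineq divide_right_mono)

theorem lemma2p3:
  fixes W w a A :: "real \<Rightarrow> real"
    and w0 \<alpha> M c :: real
    and mu :: "real measure"
    and Nx :: nat and x0 dx dt lam :: real
    and rho nu S dS ah J :: "nat \<Rightarrow> int \<Rightarrow> real"
  assumes W_C1: "\<forall>x. x \<noteq> 0 \<longrightarrow> W differentiable (at x)"
    and W_C1': "continuous_on (UNIV - {0}) (deriv W)"
    and W_eq: "weak_second_deriv_dirac W w"
    and w_cont: "continuous_on UNIV w"
    and w_bdd: "bounded (range w)"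
    and w_int: "integrable lborel w"
    and w0_def: "w0 = (LINT x|lborel. \<bar>w x\<bar>)"
    and a_deriv: "\<forall>x. a differentiable (at x)"
    and a_C1: "continuous_on UNIV (deriv a)"
    and a_mono: "\<forall>x. 0 \<le> deriv a x \<and> deriv a x \<le> \<alpha>"
    and A_prim: "\<forall>x. (A has_real_derivative a x) (at x)"
    and A0: "A 0 = 0"
    and mu_borel: "sets mu = sets borel"
    and mu_fin: "finite_measure mu"
    and mu_P1: "(\<integral>\<^sup>+ x. ennreal \<bar>x\<bar> \<partial>mu) < \<infinity>"
    and mu_cpt: "\<exists>K. compact K \<and> emeasure mu (UNIV - K) = 0"
    and M_def: "M = measure mu UNIV"
    and c_def: "c = (SUP x\<in>{- M * (1 + w0) .. M * (1 + w0)}. \<bar>a x\<bar>)"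
    and dx_pos: "0 < dx"
    and dt_pos: "0 < dt"
    and supp: "emeasure mu (UNIV - {grid x0 dx 0 .. grid x0 dx (int Nx)}) = 0"
    and lam_def: "lam = dt / dx"
    and CFL: "3 * c * lam \<le> 2"
    \<comment> \<open>rho n i = rho_i^n; conventions rho_0 = rho_Nx = 0 (and 0 outside the grid)\<close>
    and rho_bd: "\<forall>n i. (i \<le> 0 \<or> int Nx \<le> i) \<longrightarrow> rho n i = 0"
    and rho_init: "\<forall>i. 0 < i \<and> i < int Nx \<longrightarrow>
                     rho 0 i = measure mu {grid x0 dx i ..< grid x0 dx (i + 1)} / dx"
    and nu_def: "\<forall>n i. nu n i = (\<Sum>k = 1 .. int Nx. rho n k * wgt w dx k i)"
    \<comment> \<open>S: conventions S_0 = S_1 = 0, discrete Poisson equation at the nodes 0..Nx\<close>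
    and S_bd: "\<forall>n. S n 0 = 0 \<and> S n 1 = 0"
    and S_eq: "\<forall>n i. 0 \<le> i \<and> i \<le> int Nx \<longrightarrow>
                 - (S n (i + 1) - 2 * S n i + S n (i - 1)) / dx\<^sup>2 + nu n i = rho n i"
    \<comment> \<open>dS n i = (partial_x S)_i^n for i = 0..Nx\<close>
    and dS_def: "\<forall>n i. - 1 \<le> i \<and> i \<le> int Nx - 1 \<longrightarrow>
                   dS n (i + 1) = (S n (i + 2) - S n i) / (2 * dx)"
    \<comment> \<open>ah n i = a_{i+1/2}^n and J n i = J_{i+1/2}^n for i = 0..Nx-1\<close>
    and ah_def: "\<forall>n i. 0 \<le> i \<and> i \<le> int Nx - 1 \<longrightarrow>
                   ah n i = (if dS n (i + 1) = dS n i then 0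
                             else (A (dS n (i + 1)) - A (dS n i)) / (dS n (i + 1) - dS n i))"
    and J_def: "\<forall>n i. 0 \<le> i \<and> i \<le> int Nx - 1 \<longrightarrow>
                  J n i = - (A (dS n (i + 1)) - A (dS n i)) / dx
                          + ah n i * (nu n (i + 1) + nu n i) / 2"
    and J_bd: "\<forall>n. J n (- 1) = 0 \<and> J n (int Nx) = 0"
    and rho_step: "\<forall>n i. 0 < i \<and> i < int Nx \<longrightarrow>
                     rho (Suc n) i = rho n i - lam / 2 * (J n i - J n (i - 1))
                                     + lam / 2 * c * (rho n (i + 1) - 2 * rho n i + rho n (i - 1))"
  shows "(\<forall>n i. 0 \<le> rho n i) \<and> (\<forall>n i. 0 \<le> i \<and> i \<le> int Nx - 1 \<longrightarrow> \<bar>ah n i\<bar> \<le> c)"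
proof -
  have M_nn: "0 \<le> M" using M_def by simp
  have w0_nn: "0 \<le> w0" unfolding w0_def by (rule integral_nonneg_AE) simp
  define R where "R = M * (1 + w0)"
  have R_nn: "0 \<le> R" using M_nn w0_nn by (simp add: R_def)
  have a_cont: "continuous_on UNIV a"
    using a_deriv by (simp add: differentiable_imp_continuous_within continuous_at_imp_continuous_on)
  have bdd: "bdd_above ((\<lambda>x. \<bar>a x\<bar>) ` {-R..R})"
    by (intro bounded_imp_bdd_above compact_imp_bounded compact_continuous_image continuous_on_rabs continuous_on_subset[OF a_cont]) auto
  have c_R: "c = (SUP x\<in>{-R..R}. \<bar>a x\<bar>)" using c_def R_def by simp
  have a_le_c: "\<And>x. \<bar>x\<bar> \<le> R \<Longrightarrow> \<bar>a x\<bar> \<le> c"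
    unfolding c_R by (rule cSUP_upper[OF _ bdd]) auto
  have c_nn: "0 \<le> c" using a_le_c[of 0] R_nn by auto
  have lam_nn: "0 \<le> lam" using lam_def dx_pos dt_pos by simp
  have dx0: "dx \<noteq> 0" using dx_pos by simp

  have Jf: "J n i = ah n i * (rho n i + rho n (i+1)) / 2" if i0: "0 \<le> i" and i1: "i \<le> int Nx - 1" for n i
  proof -
    have d1: "dS n (i+1) = (S n (i+2) - S n i)/(2*dx)" by (rule dS_def[rule_format]) (use i0 i1 in simp)
    have "dS n (i - 1 + 1) = (S n (i - 1 + 2) - S n (i - 1)) / (2 * dx)" by (rule dS_def[rule_format]) (use i0 i1 in simp)
    moreover have "i - 1 + 1 = i" "i - 1 + 2 = i + 1" by simp_all
    ultimately have d0: "dS n i = (S n (i+1) - S n (i-1))/(2*dx)" by simp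
    have e0: "- (S n (i + 1) - 2 * S n i + S n (i - 1)) / dx\<^sup>2 + nu n i = rho n i" by (rule S_eq[rule_format]) (use i0 i1 in simp)
    have "- (S n (i + 1 + 1) - 2 * S n (i + 1) + S n (i + 1 - 1)) / dx\<^sup>2 + nu n (i+1) = rho n (i+1)"
      by (rule S_eq[rule_format]) (use i0 i1 in simp)
    moreover have "i + 1 + 1 = i + 2" "i + 1 - 1 = i" by simp_all
    ultimately have e1: "- (S n (i + 2) - 2 * S n (i+1) + S n i) / dx\<^sup>2 + nu n (i+1) = rho n (i+1)" by simp
    have p0: "S n (i + 1) - 2 * S n i + S n (i - 1) = dx\<^sup>2 * (nu n i - rho n i)"
      using e0 dx0 by (simp add: field_simps)
    have p1: "S n (i + 2) - 2 * S n (i+1) + S n i = dx\<^sup>2 * (nu n (i+1) - rho n (i+1))"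
      using e1 dx0 by (simp add: field_simps)
    have diff: "dS n (i+1) - dS n i = (dx\<^sup>2 * (nu n i - rho n i) + dx\<^sup>2 * (nu n (i+1) - rho n (i+1))) / (2*dx)"
      unfolding d0 d1 p0[symmetric] p1[symmetric] using dx0 by (simp add: field_simps)
    have diff2: "dS n (i+1) - dS n i = dx * (nu n i - rho n i + nu n (i+1) - rho n (i+1)) / 2"
      unfolding diff using dx0 by (simp add: field_simps power2_eq_square)
    have Aeq: "A (dS n (i+1)) - A (dS n i) = ah n i * (dS n (i+1) - dS n i)"
      using ah_def i0 i1 by auto
    have "J n i = - (A (dS n (i + 1)) - A (dS n i)) / dx + ah n i * (nu n (i + 1) + nu n i) / 2"
      using J_def i0 i1 by auto
    also have "\<dots> = ah n i * (rho n i + rho n (i+1)) / 2"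
      unfolding Aeq diff2 using dx0 by (simp add: field_simps)
    finally show ?thesis .
  qed

  have ahb: "\<forall>i. 0 \<le> i \<and> i \<le> int Nx - 1 \<longrightarrow> \<bar>ah n i\<bar> \<le> c"
    if pos: "\<forall>i. 0 \<le> rho n i" and mass: "dx * (\<Sum>k=1..Nx. rho n (int k)) \<le> M" for n
  proof -
    define D where "D k = (S n (int k + 1) - S n (int k)) / dx" for k :: nat
    have Dform: "k \<le> Nx \<Longrightarrow> D k = - dx * (\<Sum>j=1..k. rho n (int j) - nu n (int j))" for k
    proof (induction k)
      case 0 then show ?case using S_bd by (simp add: D_def)
    next
      case (Suc k)
      have e: "- (S n (int k + 1 + 1) - 2 * S n (int k + 1) + S n (int k + 1 - 1)) / dx\<^sup>2 + nu n (int k + 1) = rho n (int k + 1)"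
        by (rule S_eq[rule_format]) (use Suc.prems in simp)
      have "D (Suc k) - D k = (S n (int k + 1 + 1) - 2 * S n (int k + 1) + S n (int k + 1 - 1)) / dx"
        using dx0 by (simp add: D_def field_simps)
      also have "\<dots> = - dx * (rho n (int k + 1) - nu n (int k + 1))"
        using e dx0 by (simp add: field_simps power2_eq_square)
      finally have "D (Suc k) = D k - dx * (rho n (int k + 1) - nu n (int k + 1))" by simp
      then show ?case using Suc by (simp add: sum.cl_ivl_Suc algebra_simps)
    qed
    have Dm1: "(S n 0 - S n (-1)) / dx = - dx * nu n 0"
    proof -
      have "- (S n (0 + 1) - 2 * S n 0 + S n (0 - 1)) / dx\<^sup>2 + nu n 0 = rho n 0" by (rule S_eq[rule_format]) simp
      moreover have "rho n 0 = 0" using rho_bd by auto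
      ultimately have "S n (-1) = dx\<^sup>2 * nu n 0" using S_bd dx0 by (simp add: field_simps)
      then show ?thesis using S_bd dx0 by (simp add: field_simps power2_eq_square)
    qed
    define B where "B = dx * (\<Sum>j=0..Nx. rho n (int j) + \<bar>nu n (int j)\<bar>)"
    have tnn: "\<forall>j. 0 \<le> rho n (int j) + \<bar>nu n (int j)\<bar>" using pos by (simp add: add_nonneg_nonneg)
    have DB: "\<bar>D k\<bar> \<le> B" if kN: "k \<le> Nx" for k
    proof -
      have "\<bar>D k\<bar> = dx * \<bar>\<Sum>j=1..k. rho n (int j) - nu n (int j)\<bar>"
        using Dform[OF kN] dx_pos by (simp add: abs_mult)
      also have "\<dots> \<le> dx * (\<Sum>j=1..k. \<bar>rho n (int j) - nu n (int j)\<bar>)"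
        using dx_pos by (intro mult_left_mono sum_abs) auto
      also have "\<dots> \<le> dx * (\<Sum>j=1..k. rho n (int j) + \<bar>nu n (int j)\<bar>)"
        using dx_pos pos by (intro mult_left_mono sum_mono) (auto intro: order.trans[OF abs_triangle_ineq4])
      also have "\<dots> \<le> B"
        unfolding B_def using dx_pos kN tnn by (intro mult_left_mono sum_mono2) auto
      finally show ?thesis .
    qed
    have Dm1B: "\<bar>(S n 0 - S n (-1)) / dx\<bar> \<le> B"
    proof -
      have "\<bar>(S n 0 - S n (-1)) / dx\<bar> = dx * \<bar>nu n (int 0)\<bar>" using Dm1 dx_pos by (simp add: abs_mult)
      also have "\<dots> \<le> dx * (rho n (int 0) + \<bar>nu n (int 0)\<bar>)" using pos dx_pos by simp
      also have "\<dots> \<le> B" unfolding B_def using dx_pos tnn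
        by (intro mult_left_mono member_le_sum) auto
      finally show ?thesis .
    qed
    define m where "m = (\<Sum>k=1..Nx. rho n (int k))"
    have m_nn: "0 \<le> m" unfolding m_def using pos by (simp add: sum_nonneg)
    have wb: "(\<Sum>j=0..Nx. \<bar>wgt w dx k (int j)\<bar>) \<le> w0" for k
    proof -
      have "(\<Sum>j=0..Nx. \<bar>wgt w dx k (int j)\<bar>)
          = (\<Sum>j<Suc Nx. \<bar>LBINT z = real_of_int (-1-k)*dx + real j*dx .. real_of_int (-1-k)*dx + real (j+1)*dx. w z\<bar>)"
      proof -
        have "(\<Sum>j=0..Nx. \<bar>wgt w dx k (int j)\<bar>) = (\<Sum>j<Suc Nx. \<bar>wgt w dx k (int j)\<bar>)"
          by (simp add: atLeast0AtMost lessThan_Suc_atMost)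
        also have "\<dots> = (\<Sum>j<Suc Nx. \<bar>LBINT z = real_of_int (-1-k)*dx + real j*dx .. real_of_int (-1-k)*dx + real (j+1)*dx. w z\<bar>)"
        proof (rule sum.cong[OF refl])
          fix j assume "j \<in> {..<Suc Nx}"
          have "real_of_int (int j - 1 - k) * dx = real_of_int (-1-k)*dx + real j*dx"
            by (simp add: algebra_simps)
          moreover have "real_of_int (int j - k) * dx = real_of_int (-1-k)*dx + real (j+1)*dx"
            by (simp add: algebra_simps)
          ultimately show "\<bar>wgt w dx k (int j)\<bar> = \<bar>LBINT z = real_of_int (-1-k)*dx + real j*dx .. real_of_int (-1-k)*dx + real (j+1)*dx. w z\<bar>"
            by (simp add: wgt_def)
        qed
        finally show ?thesis .
      qed
      also have "\<dots> \<le> w0" unfolding w0_def by (rule wsum[OF w_int dx_pos])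
      finally show ?thesis .
    qed
    have nub: "\<bar>nu n (int j)\<bar> \<le> (\<Sum>k=1..Nx. rho n (int k) * \<bar>wgt w dx (int k) (int j)\<bar>)" for j
    proof -
      have "nu n (int j) = (\<Sum>k=1..Nx. rho n (int k) * wgt w dx (int k) (int j))"
        using nu_def int_sum_nat by simp
      then have "\<bar>nu n (int j)\<bar> \<le> (\<Sum>k=1..Nx. \<bar>rho n (int k) * wgt w dx (int k) (int j)\<bar>)"
        by (simp add: sum_abs)
      also have "\<dots> = (\<Sum>k=1..Nx. rho n (int k) * \<bar>wgt w dx (int k) (int j)\<bar>)"
        using pos by (simp add: abs_mult)
      finally show ?thesis .
    qed
    have nusum: "(\<Sum>j=0..Nx. \<bar>nu n (int j)\<bar>) \<le> w0 * m"
    proof -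
      have "(\<Sum>j=0..Nx. \<bar>nu n (int j)\<bar>) \<le> (\<Sum>j=0..Nx. \<Sum>k=1..Nx. rho n (int k) * \<bar>wgt w dx (int k) (int j)\<bar>)"
        by (rule sum_mono) (rule nub)
      also have "\<dots> = (\<Sum>k=1..Nx. rho n (int k) * (\<Sum>j=0..Nx. \<bar>wgt w dx (int k) (int j)\<bar>))"
        by (simp add: sum.swap[of _ "{0..Nx}"] sum_distrib_left)
      also have "\<dots> \<le> (\<Sum>k=1..Nx. rho n (int k) * w0)"
        using pos wb by (intro sum_mono mult_left_mono) auto
      also have "\<dots> = w0 * m" unfolding m_def by (simp add: sum_distrib_left mult.commute)
      finally show ?thesis .
    qed
    have rsum: "(\<Sum>j=0..Nx. rho n (int j)) = m"
    proof -
      have "rho n (int 0) = 0" using rho_bd by simp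
      then show ?thesis unfolding m_def by (simp add: sum.atLeast_Suc_atMost)
    qed
    have B_le: "B \<le> R"
    proof -
      have "B = dx * m + dx * (\<Sum>j=0..Nx. \<bar>nu n (int j)\<bar>)"
        unfolding B_def rsum[symmetric] by (simp add: sum.distrib distrib_left)
      also have "\<dots> \<le> dx * m + dx * (w0 * m)" using nusum dx_pos by simp
      also have "\<dots> = (dx * m) * (1 + w0)" by (simp add: algebra_simps)
      also have "\<dots> \<le> M * (1 + w0)" using mass w0_nn unfolding m_def by (intro mult_right_mono) auto
      finally show ?thesis unfolding R_def .
    qed
    have dSb: "\<bar>dS n j\<bar> \<le> R" if j0: "0 \<le> j" and j1: "j \<le> int Nx" for j
    proof -
      obtain k where k: "j = int k" using j0 nonneg_int_cases by blast
      have kN: "k \<le> Nx" using k j1 by simp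
      show ?thesis
      proof (cases k)
        case 0
        have "dS n (-1 + 1) = (S n (-1 + 2) - S n (-1)) / (2 * dx)" by (rule dS_def[rule_format]) simp
        then have "dS n 0 = (S n 1 - S n (-1)) / (2 * dx)" by simp
        also have "\<dots> = (D 0 + (S n 0 - S n (-1)) / dx) / 2"
          unfolding D_def using dx0 by (simp add: field_simps)
        finally have "\<bar>dS n 0\<bar> \<le> (\<bar>D 0\<bar> + \<bar>(S n 0 - S n (-1)) / dx\<bar>) / 2" by (rule half_abs)
        also have "\<dots> \<le> B" using DB[of 0] Dm1B by simp
        finally show ?thesis using B_le k 0 by simp
      next
        case (Suc k')
        have "dS n (int k' + 1) = (S n (int k' + 2) - S n (int k')) / (2 * dx)"
          by (rule dS_def[rule_format]) (use kN Suc in simp)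
        moreover have kk: "int k = int k' + 1" using Suc by simp
        ultimately have "dS n (int k) = (S n (int k' + 2) - S n (int k')) / (2 * dx)" by simp
        also have "\<dots> = (D k + D k') / 2"
          unfolding D_def kk using dx0 by (simp add: field_simps)
        finally have "\<bar>dS n (int k)\<bar> \<le> (\<bar>D k\<bar> + \<bar>D k'\<bar>) / 2" by (rule half_abs)
        also have "\<dots> \<le> B" using DB[of k] DB[of k'] kN Suc by simp
        finally show ?thesis using B_le k by simp
      qed
    qed
    show ?thesis
    proof (intro allI impI)
      fix i assume i: "0 \<le> i \<and> i \<le> int Nx - 1"
      show "\<bar>ah n i\<bar> \<le> c"
      proof (cases "dS n (i + 1) = dS n i")
        case True then show ?thesis using ah_def i c_nn by simp
      next
        case False
        have "\<bar>(A (dS n (i + 1)) - A (dS n i)) / (dS n (i + 1) - dS n i)\<bar> \<le> c"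
          by (rule dq_bound[OF A_prim a_le_c]) (use dSb i False in auto)
        then show ?thesis using ah_def i False by simp
      qed
    qed
  qed

  have main: "(\<forall>i. 0 \<le> rho n i) \<and> dx * (\<Sum>k=1..Nx. rho n (int k)) \<le> M" for n
  proof (induction n)
    case 0
    have sp: "space mu = UNIV" using sets_eq_imp_space_eq[OF mu_borel] by simp
    have pos: "\<forall>i. 0 \<le> rho 0 i"
    proof
      fix i show "0 \<le> rho 0 i"
      proof (cases "0 < i \<and> i < int Nx")
        case True then show ?thesis using rho_init dx_pos by simp
      next
        case False then show ?thesis using rho_bd by auto
      qed
    qed
    define I where "I k = {grid x0 dx (int k) ..< grid x0 dx (int k + 1)}" for k :: nat
    have "dx * (\<Sum>k=1..Nx. rho 0 (int k)) = (\<Sum>k=1..Nx. dx * rho 0 (int k))"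
      by (simp add: sum_distrib_left)
    also have "\<dots> \<le> (\<Sum>k\<in>{1..Nx}. measure mu (I k))"
    proof (rule sum_mono)
      fix k assume k: "k \<in> {1..Nx}"
      show "dx * rho 0 (int k) \<le> measure mu (I k)"
      proof (cases "k < Nx")
        case True then show ?thesis using rho_init k dx0 by (simp add: I_def)
      next
        case False then show ?thesis using rho_bd by simp
      qed
    qed
    also have "\<dots> = measure mu (\<Union>k\<in>{1..Nx}. I k)"
    proof (rule measure_finite_Union[symmetric])
      show "finite {1..Nx}" by simp
      show "I ` {1..Nx} \<subseteq> sets mu" unfolding mu_borel I_def by (auto intro: atLeastLessThan_borel)
      show "disjoint_family_on I {1..Nx}"
        unfolding disjoint_family_on_def I_def grid_def
      proof (intro ballI impI)
        fix k l :: nat assume "k \<noteq> l"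
        show "{x0 + real_of_int (int k) * dx..<x0 + real_of_int (int k + 1) * dx} \<inter>
              {x0 + real_of_int (int l) * dx..<x0 + real_of_int (int l + 1) * dx} = {}"
        proof (rule ccontr)
          assume "\<not> ?thesis"
          then obtain x where xin: "x \<in> {x0 + real_of_int (int k) * dx..<x0 + real_of_int (int k + 1) * dx} \<inter>
              {x0 + real_of_int (int l) * dx..<x0 + real_of_int (int l + 1) * dx}" by blast
          have x: "x0 + real k * dx \<le> x" "x < x0 + real (k+1) * dx"
             "x0 + real l * dx \<le> x" "x < x0 + real (l+1) * dx" using xin by (auto simp: algebra_simps)
          have "l \<le> k" using disj_aux[OF dx_pos x(3) x(2)] .
          moreover have "k \<le> l" using disj_aux[OF dx_pos x(1) x(4)] .
          ultimately show False using \<open>k \<noteq> l\<close> by simp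
        qed
      qed
      show "\<And>i. i \<in> {1..Nx} \<Longrightarrow> emeasure mu (I i) \<noteq> \<infinity>"
        using finite_measure.emeasure_finite[OF mu_fin] by simp
    qed
    also have "\<dots> \<le> measure mu (space mu)" by (rule finite_measure.bounded_measure[OF mu_fin])
    also have "\<dots> = M" using M_def sp by simp
    finally show ?case using pos by simp
  next
    case (Suc n)
    have pos: "\<forall>i. 0 \<le> rho n i" and mass: "dx * (\<Sum>k=1..Nx. rho n (int k)) \<le> M" using Suc by auto
    have ab: "\<And>i. 0 \<le> i \<Longrightarrow> i \<le> int Nx - 1 \<Longrightarrow> \<bar>ah n i\<bar> \<le> c" using ahb[OF pos mass] by blast
    have stp: "rho (Suc n) i = rho n i * (1 - lam * ah n i / 4 + lam * ah n (i-1) / 4 - lam * c)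
                 + rho n (i+1) * (lam * c / 2 - lam * ah n i / 4) + rho n (i-1) * (lam * c / 2 + lam * ah n (i-1) / 4)"
      if i: "0 < i" "i < int Nx" for i
    proof -
      have j1: "J n i = ah n i * (rho n i + rho n (i+1)) / 2" using Jf i by simp
      have "J n (i - 1) = ah n (i-1) * (rho n (i-1) + rho n (i - 1 + 1)) / 2" using Jf i by simp
      then have j0: "J n (i - 1) = ah n (i-1) * (rho n (i-1) + rho n i) / 2" by simp
      have r: "rho (Suc n) i = rho n i - lam / 2 * (J n i - J n (i - 1)) + lam / 2 * c * (rho n (i + 1) - 2 * rho n i + rho n (i - 1))"
        using rho_step i by blast
      show ?thesis unfolding r j0 j1 by (simp add: field_simps)
    qed
    have pos': "\<forall>i. 0 \<le> rho (Suc n) i"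
    proof
      fix i show "0 \<le> rho (Suc n) i"
      proof (cases "0 < i \<and> i < int Nx")
        case False then show ?thesis using rho_bd by auto
      next
        case True
        have a1: "\<bar>ah n i\<bar> \<le> c" using ab True by simp
        have a0: "\<bar>ah n (i-1)\<bar> \<le> c" using ab True by simp
        have l1: "lam * ah n i \<le> lam * c" using a1 lam_nn by (intro mult_left_mono) auto
        have l2: "- (lam * c) \<le> lam * ah n i" using mult_left_mono[of "- c" "ah n i" lam] a1 lam_nn by (simp add: abs_le_iff)
        have l3: "lam * ah n (i-1) \<le> lam * c" using a0 lam_nn by (intro mult_left_mono) auto
        have l4: "- (lam * c) \<le> lam * ah n (i-1)" using mult_left_mono[of "- c" "ah n (i-1)" lam] a0 lam_nn by (simp add: abs_le_iff)
        have lc: "0 \<le> lam * c" using lam_nn c_nn by simp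
        have CFL': "3 * (lam * c) \<le> 2" using CFL by (simp add: mult.commute mult.left_commute)
        have k1: "0 \<le> 1 - lam * ah n i / 4 + lam * ah n (i-1) / 4 - lam * c"
          using l1 l4 CFL' by linarith
        have k2: "0 \<le> lam * c / 2 - lam * ah n i / 4" using l1 lc by linarith
        have k3: "0 \<le> lam * c / 2 + lam * ah n (i-1) / 4" using l4 lc by linarith
        show ?thesis unfolding stp[OF conjunct1[OF True] conjunct2[OF True]]
          using mult_nonneg_nonneg[OF _ k1, of "rho n i"] mult_nonneg_nonneg[OF _ k2, of "rho n (i+1)"]
             mult_nonneg_nonneg[OF _ k3, of "rho n (i-1)"] pos by (meson add_nonneg_nonneg)
      qed
    qed
    have mass': "dx * (\<Sum>k=1..Nx. rho (Suc n) (int k)) \<le> M"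
    proof (cases "Nx = 0")
      case True then show ?thesis using M_nn by simp
    next
      case False
      define F where "F i = lam / 2 * J n i - lam / 2 * c * (rho n (i+1) - rho n i)" for i
      have s1: "(\<Sum>k=1..Nx. rho (Suc n) (int k)) = (\<Sum>k=1..Nx-1. rho (Suc n) (int k))"
        using rho_bd by (intro drop_last) simp
      have s2: "(\<Sum>k=1..Nx. rho n (int k)) = (\<Sum>k=1..Nx-1. rho n (int k))"
        using rho_bd by (intro drop_last) simp
      have "(\<Sum>k=1..Nx-1. rho (Suc n) (int k)) = (\<Sum>k=1..Nx-1. rho n (int k) - (F (int k) - F (int k - 1)))"
      proof (rule sum.cong[OF refl])
        fix k assume k: "k \<in> {1..Nx-1}"
        then have "0 < int k" "int k < int Nx" by auto
        then show "rho (Suc n) (int k) = rho n (int k) - (F (int k) - F (int k - 1))"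
          using rho_step[rule_format, of "int k" n] unfolding F_def by (simp add: algebra_simps)
      qed
      also have "\<dots> = (\<Sum>k=1..Nx-1. rho n (int k)) - (F (int (Nx-1)) - F 0)"
        by (subst sum_subtractf) (simp only: tele)
      finally have eq: "(\<Sum>k=1..Nx. rho (Suc n) (int k)) = (\<Sum>k=1..Nx. rho n (int k)) - (F (int (Nx-1)) - F 0)"
        using s1 s2 by simp
      have iN: "int (Nx - 1) = int Nx - 1" using False by simp
      have rN: "rho n (int Nx) = 0" "rho n 0 = 0" using rho_bd by auto
      have aN: "\<bar>ah n (int Nx - 1)\<bar> \<le> c" using ab False by simp
      have a0: "\<bar>ah n 0\<bar> \<le> c" using ab False by simp
      have FN: "F (int (Nx-1)) = lam * rho n (int Nx - 1) * (ah n (int Nx - 1) / 4 + c / 2)"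
        unfolding iN F_def using Jf[of "int Nx - 1" n] False rN by (simp add: algebra_simps)
      have F0: "F 0 = lam * rho n 1 * (ah n 0 / 4 - c / 2)"
        unfolding F_def using Jf[of 0 n] False rN by (simp add: algebra_simps)
      have "0 \<le> F (int (Nx-1))" unfolding FN using aN c_nn lam_nn pos
        by (intro mult_nonneg_nonneg) (auto simp: abs_le_iff)
      moreover have "F 0 \<le> 0" unfolding F0 using a0 c_nn lam_nn pos
        by (intro mult_nonneg_nonpos mult_nonneg_nonneg) (auto simp: abs_le_iff)
      ultimately have "(\<Sum>k=1..Nx. rho (Suc n) (int k)) \<le> (\<Sum>k=1..Nx. rho n (int k))" using eq by simp
      then have "dx * (\<Sum>k=1..Nx. rho (Suc n) (int k)) \<le> dx * (\<Sum>k=1..Nx. rho n (int k))"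
        using dx_pos by simp
      then show ?thesis using mass by simp
    qed
    show ?case using pos' mass' by simp
  qed

  show ?thesis
  proof
    show "\<forall>n i. 0 \<le> rho n i" using main by blast
    show "\<forall>n i. 0 \<le> i \<and> i \<le> int Nx - 1 \<longrightarrow> \<bar>ah n i\<bar> \<le> c"
      using ahb main by blast
  qed
qed

end
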